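(* Let $A$ be a Noetherian commutative ring with identity, let $A[\mathbf{x}]=A[x_1,\ldots,x_n]$ be equipped with a monomial order, let $I\subset A[\mathbf{x}]$ be an ideal, let $p\subset A$ be a prime, and let $B=A_p/(I\cap A)_p$. If for each monomial $\mathbf{x}^E$ the ideal $\mathrm{in}(I)_E\,B$ is either $(0)$ or $(1)$, then $$\mathrm{in}(I)\,k(p)[\mathbf{x}]=\mathrm{in}(I\,k(p)[\mathbf{x}]).$$
   Context: A monomial order $>$ is a total order on monomials such that $\mathbf{x}^E>\mathbf{x}^F$ implies $\mathbf{x}^G\mathbf{x}^E>\mathbf{x}^G\mathbf{x}^F$, and $x_i>1$ for each $i$. $\mathrm{in}(f)$ is the greatest term $c\,\mathbf{x}^E$ ($c\neq0$) of a nonzero polynomial $f$; $\mathrm{in}(I)$ is the ideal generated by all $\mathrm{in}(f)$, $f\in I$. For an ideal $J\subset A[\mathbf{x}]$ and exponent $E$, the coefficient ideal is $J_E=(c\in A\mid c\,\mathbf{x}^E\in J)$; $J_E B$ is the ideal of $B$ generated by its image. $k(p)=A_p/pA_p$ is the residue field of $p$, and $K\,k(p)[\mathbf{x}]$ denotes the ideal generated by the image of $K\subset A[\mathbf{x}]$ under the coefficientwise map $A\to k(p)$. *)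

theory Defs
  imports Main "HOL-Library.Poly_Mapping"
begin

definition is_ideal :: "'a::comm_ring set \<Rightarrow> bool" where
  "is_ideal J \<longleftrightarrow> 0 \<in> J \<and> (\<forall>x\<in>J. \<forall>y\<in>J. x + y \<in> J) \<and> (\<forall>r. \<forall>x\<in>J. r * x \<in> J)"

definition ideal_gen :: "'a::comm_ring set \<Rightarrow> 'a set" where
  "ideal_gen S = \<Inter> {J. is_ideal J \<and> S \<subseteq> J}"

definition prime_ideal :: "'a::comm_ring_1 set \<Rightarrow> bool" where
  "prime_ideal P \<longleftrightarrow> is_ideal P \<and> 1 \<notin> P \<and> (\<forall>a b. a * b \<in> P \<longrightarrow> a \<in> P \<or> b \<in> P)"

definition noetherian_ring :: "'a::comm_ring_1 itself \<Rightarrow> bool" where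
  "noetherian_ring _ \<longleftrightarrow> (\<forall>J::'a set. is_ideal J \<longrightarrow> (\<exists>F. finite F \<and> J = ideal_gen F))"

text \<open>The target ring is only required to be of class \<open>comm_ring\<close> (not
  \<open>comm_ring_1\<close>, which forces \<open>0 \<noteq> 1\<close>), so that the zero ring \<open>A_P/K_P = 0\<close>
  (when \<open>K \<not>\<subseteq> P\<close>) is allowed; its identity is \<open>\<psi> 1\<close>.\<close>
text \<open>\<open>is_loc_quot P K \<psi>\<close>: the ring hom \<open>\<psi> : A \<rightarrow> R\<close> identifies \<open>R\<close> with
  \<open>A_P / K_P\<close> (with \<open>\<psi>\<close> the canonical map \<open>a \<mapsto> a/1\<close>). This is the standard
  characterisation of this ring: \<open>\<psi>\<close> is a ring homomorphism, elements outside
  \<open>P\<close> become units, every element is of the form \<open>\<psi> a / \<psi> s\<close> with \<open>s \<notin> P\<close>, and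
  \<open>\<psi> a = 0\<close> iff \<open>a/1 \<in> K_P\<close>, i.e. iff \<open>s a \<in> K\<close> for some \<open>s \<notin> P\<close>.
  For \<open>K = P\<close> this is the residue field \<open>k(P) = A_P / P A_P\<close>.\<close>
definition is_loc_quot :: "'a::comm_ring_1 set \<Rightarrow> 'a set \<Rightarrow> ('a \<Rightarrow> 'b::comm_ring) \<Rightarrow> bool" where
  "is_loc_quot P K \<psi> \<longleftrightarrow>
     (\<forall>y. \<psi> 1 * y = y) \<and> (\<forall>a b. \<psi> (a + b) = \<psi> a + \<psi> b) \<and> (\<forall>a b. \<psi> (a * b) = \<psi> a * \<psi> b) \<and>
     (\<forall>s. s \<notin> P \<longrightarrow> (\<exists>u. \<psi> s * u = \<psi> 1)) \<and>
     (\<forall>y. \<exists>a s. s \<notin> P \<and> y * \<psi> s = \<psi> a) \<and>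
     (\<forall>a. \<psi> a = 0 \<longleftrightarrow> (\<exists>s. s \<notin> P \<and> s * a \<in> K))"

text \<open>Polynomials over \<open>'a\<close> in the variables \<open>'v\<close> (a finite type, i.e. \<open>x_1,\<dots>,x_n\<close>):
  finitely supported maps from exponent vectors \<open>'v \<Rightarrow>\<^sub>0 nat\<close> to coefficients.
  The exponent \<open>E\<close> stands for the monomial \<open>x^E\<close>; \<open>x^E x^F = x^(E+F)\<close>.\<close>
type_synonym ('v, 'a) mpoly = "('v \<Rightarrow>\<^sub>0 nat) \<Rightarrow>\<^sub>0 'a"

text \<open>A monomial order, given as the strict order \<open>ord F E\<close> meaning \<open>x^F < x^E\<close>.\<close>
definition monomial_order :: "(('v \<Rightarrow>\<^sub>0 nat) \<Rightarrow> ('v \<Rightarrow>\<^sub>0 nat) \<Rightarrow> bool) \<Rightarrow> bool" where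
  "monomial_order ord \<longleftrightarrow>
     (\<forall>E. \<not> ord E E) \<and>
     (\<forall>E F G. ord E F \<longrightarrow> ord F G \<longrightarrow> ord E G) \<and>
     (\<forall>E F. E \<noteq> F \<longrightarrow> ord E F \<or> ord F E) \<and>
     (\<forall>E F G. ord F E \<longrightarrow> ord (G + F) (G + E)) \<and>
     (\<forall>i. ord 0 (Poly_Mapping.single i 1))"

definition lead_exp :: "(('v \<Rightarrow>\<^sub>0 nat) \<Rightarrow> ('v \<Rightarrow>\<^sub>0 nat) \<Rightarrow> bool) \<Rightarrow> ('v, 'a::zero) mpoly \<Rightarrow> 'v \<Rightarrow>\<^sub>0 nat" where
  "lead_exp ord f = (THE E. E \<in> Poly_Mapping.keys f \<and> (\<forall>F\<in>Poly_Mapping.keys f. F \<noteq> E \<longrightarrow> ord F E))"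

definition init_term :: "(('v \<Rightarrow>\<^sub>0 nat) \<Rightarrow> ('v \<Rightarrow>\<^sub>0 nat) \<Rightarrow> bool) \<Rightarrow> ('v, 'a::zero) mpoly \<Rightarrow> ('v, 'a) mpoly" where
  "init_term ord f = Poly_Mapping.single (lead_exp ord f) (Poly_Mapping.lookup f (lead_exp ord f))"

definition init_ideal :: "(('v \<Rightarrow>\<^sub>0 nat) \<Rightarrow> ('v \<Rightarrow>\<^sub>0 nat) \<Rightarrow> bool) \<Rightarrow> ('v, 'a::comm_ring_1) mpoly set \<Rightarrow> ('v, 'a) mpoly set" where
  "init_ideal ord I = ideal_gen {init_term ord f | f. f \<in> I \<and> f \<noteq> 0}"

definition coeff_ideal :: "('v, 'a::comm_ring_1) mpoly set \<Rightarrow> ('v \<Rightarrow>\<^sub>0 nat) \<Rightarrow> 'a set" where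
  "coeff_ideal J E = ideal_gen {c. Poly_Mapping.single E c \<in> J}"

text \<open>Contraction \<open>I \<inter> A\<close> (constants lying in \<open>I\<close>).\<close>
definition contract :: "('v, 'a::comm_ring_1) mpoly set \<Rightarrow> 'a set" where
  "contract I = {c. Poly_Mapping.single 0 c \<in> I}"

end

theory Submission
  imports Defs Complex_Main
begin


section \<open>Ideals\<close>

lemma ideal_gen_is_ideal: "is_ideal (ideal_gen S)"
  unfolding ideal_gen_def is_ideal_def by auto

lemma ideal_gen_sup: "S \<subseteq> ideal_gen S"
  unfolding ideal_gen_def by auto

lemma ideal_gen_least: "is_ideal J \<Longrightarrow> S \<subseteq> J \<Longrightarrow> ideal_gen S \<subseteq> J"
  unfolding ideal_gen_def by auto

lemma ideal_0: "is_ideal J \<Longrightarrow> 0 \<in> J" unfolding is_ideal_def by auto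
lemma ideal_add: "is_ideal J \<Longrightarrow> x \<in> J \<Longrightarrow> y \<in> J \<Longrightarrow> x + y \<in> J" unfolding is_ideal_def by auto
lemma ideal_mult: "is_ideal J \<Longrightarrow> x \<in> J \<Longrightarrow> r * x \<in> J" unfolding is_ideal_def by auto
lemma ideal_neg: "is_ideal (J::'a::comm_ring_1 set) \<Longrightarrow> x \<in> J \<Longrightarrow> - x \<in> J"
  using ideal_mult[of J x "-1"] by simp
lemma ideal_diff: "is_ideal (J::'a::comm_ring_1 set) \<Longrightarrow> x \<in> J \<Longrightarrow> y \<in> J \<Longrightarrow> x - y \<in> J"
  using ideal_add[of J x "-y"] ideal_neg[of J y] by simp

lemma pm_update_eq: "a \<notin> Poly_Mapping.keys f \<Longrightarrow> Poly_Mapping.update a b f = f + Poly_Mapping.single a b"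
  by (rule poly_mapping_eqI) (auto simp: lookup_update lookup_add lookup_single in_keys_iff when_def)

lemma pm_induct[case_names zero add]:
  assumes "P 0" and "\<And>f a b. P f \<Longrightarrow> a \<notin> Poly_Mapping.keys f \<Longrightarrow> b \<noteq> 0 \<Longrightarrow> P (f + Poly_Mapping.single a b)"
  shows "P f"
  using assms update_induct[of P f] pm_update_eq by metis

lemma lookup_map0: "g 0 = 0 \<Longrightarrow> Poly_Mapping.lookup (Poly_Mapping.map g f) k = g (Poly_Mapping.lookup f k)"
  by (simp add: Poly_Mapping.map.rep_eq when_def)

lemma keys_map_sub: "g 0 = 0 \<Longrightarrow> Poly_Mapping.keys (Poly_Mapping.map g f) \<subseteq> Poly_Mapping.keys f"
  by (auto simp: in_keys_iff lookup_map0)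

lemma lookup_smult: "Poly_Mapping.lookup (Poly_Mapping.single 0 c * f) k = (c::'a::comm_ring_1) * Poly_Mapping.lookup f k"
  by (simp add: mult_map_scale_conv_mult[symmetric] lookup_map0)

lemma keys_smult: "Poly_Mapping.keys (Poly_Mapping.single 0 c * f) \<subseteq> Poly_Mapping.keys (f :: ('v \<Rightarrow>\<^sub>0 nat) \<Rightarrow>\<^sub>0 'a::comm_ring_1)"
  by (auto simp: in_keys_iff lookup_smult)

lemma keys_smult_field: "c \<noteq> 0 \<Longrightarrow> Poly_Mapping.keys (Poly_Mapping.single 0 c * f) = Poly_Mapping.keys (f :: ('v \<Rightarrow>\<^sub>0 nat) \<Rightarrow>\<^sub>0 'a::field)"
  by (auto simp: in_keys_iff lookup_smult)

lemma lookup_single_mult: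
  "Poly_Mapping.lookup (Poly_Mapping.single A a * h) (A + B) = (a::'a::comm_ring_1) * Poly_Mapping.lookup h (B :: 'v \<Rightarrow>\<^sub>0 nat)"
proof (induction h rule: pm_induct)
  case zero
  then show ?case by simp
next
  case (add f C c)
  have "Poly_Mapping.single A a * (f + Poly_Mapping.single C c)
     = Poly_Mapping.single A a * f + Poly_Mapping.single (A + C) (a * c)"
    by (simp add: distrib_left mult_single)
  have "Poly_Mapping.lookup (Poly_Mapping.single (A + C) (a * c)) (A + B)
      = a * Poly_Mapping.lookup (Poly_Mapping.single C c) B"
    by (cases "C = B") (auto simp: lookup_single_not_eq)
  then show ?case using add.IH \<open>Poly_Mapping.single A a * (f + Poly_Mapping.single C c)
     = Poly_Mapping.single A a * f + Poly_Mapping.single (A + C) (a * c)\<close>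
    by (simp add: lookup_add distrib_left)
qed

lemma keys_single_mult:
  "Poly_Mapping.keys (Poly_Mapping.single A a * h) \<subseteq> {A + G | G. G \<in> Poly_Mapping.keys (h :: ('v \<Rightarrow>\<^sub>0 nat) \<Rightarrow>\<^sub>0 'a::comm_ring_1)}"
  using keys_mult[of "Poly_Mapping.single A a" h] by (auto split: if_splits)

section \<open>Dickson\<close>

lemma nat_mono_subseq:
  fixes s :: "nat \<Rightarrow> nat"
  shows "\<exists>g::nat\<Rightarrow>nat. strict_mono g \<and> (\<forall>i j. i \<le> j \<longrightarrow> s (g i) \<le> s (g j))"
proof -
  obtain f where f: "strict_mono f" "monoseq (\<lambda>n. s (f n))" using seq_monosub by blast
  show ?thesis
  proof (cases "\<forall>m n. m \<le> n \<longrightarrow> s (f m) \<le> s (f n)")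
    case True then show ?thesis using f by blast
  next
    case False
    then have dec: "\<forall>m n. m \<le> n \<longrightarrow> s (f n) \<le> s (f m)" using f(2) unfolding monoseq_def by blast
    define m where "m = (LEAST v. v \<in> range (\<lambda>n. s (f n)))"
    have "m \<in> range (\<lambda>n. s (f n))" unfolding m_def by (rule LeastI[of _ "s (f 0)"]) simp
    then obtain N where N: "s (f N) = m" by auto
    have mn: "m \<le> s (f n)" for n unfolding m_def by (rule Least_le) simp
    have sm: "strict_mono (\<lambda>n. f (N + n))" using f(1) unfolding strict_mono_def by simp
    have "s (f (N + i)) \<le> s (f (N + j))" for i j
      using dec[rule_format, of N "N+i"] mn[of "N+j"] N by simp
    then show ?thesis using sm by blast
  qed
qed

lemma dickson_gen:
  fixes h :: "nat \<Rightarrow> 'v \<Rightarrow> nat"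
  assumes "finite V"
  shows "\<exists>g::nat\<Rightarrow>nat. strict_mono g \<and> (\<forall>i j. i \<le> j \<longrightarrow> (\<forall>v\<in>V. h (g i) v \<le> h (g j) v))"
  using assms
proof (induction V rule: finite_induct)
  case empty
  have "strict_mono (\<lambda>n::nat. n)" by (simp add: strict_mono_def)
  then show ?case by blast
next
  case (insert v V)
  then obtain g :: "nat \<Rightarrow> nat" where g: "strict_mono g" "\<forall>i j. i \<le> j \<longrightarrow> (\<forall>v\<in>V. h (g i) v \<le> h (g j) v)" by blast
  obtain g2 :: "nat \<Rightarrow> nat" where g2: "strict_mono g2" "\<forall>i j. i \<le> j \<longrightarrow> h (g (g2 i)) v \<le> h (g (g2 j)) v"
    using nat_mono_subseq[of "\<lambda>n. h (g n) v"] by blast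
  have sm: "strict_mono (\<lambda>n. g (g2 n))" using g(1) g2(1) by (simp add: strict_mono_def)
  have "\<forall>i j. i \<le> j \<longrightarrow> (\<forall>w\<in>insert v V. h (g (g2 i)) w \<le> h (g (g2 j)) w)"
  proof (intro allI impI ballI)
    fix i j w assume ij: "(i::nat) \<le> j" and w: "w \<in> insert v V"
    have "g2 i \<le> g2 j" using ij g2(1) by (simp add: strict_mono_less_eq)
    then show "h (g (g2 i)) w \<le> h (g (g2 j)) w" using w g(2) g2(2) ij by blast
  qed
  then show ?case using sm by blast
qed

lemma dickson:
  fixes f :: "nat \<Rightarrow> ('v::finite \<Rightarrow>\<^sub>0 nat)"
  shows "\<exists>i j. i < j \<and> (\<forall>v. Poly_Mapping.lookup (f i) v \<le> Poly_Mapping.lookup (f j) v)"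
proof -
  obtain g :: "nat \<Rightarrow> nat" where g: "strict_mono g" "\<forall>i j. i \<le> j \<longrightarrow> (\<forall>v\<in>UNIV. Poly_Mapping.lookup (f (g i)) v \<le> Poly_Mapping.lookup (f (g j)) v)"
    using dickson_gen[OF finite_UNIV, of "\<lambda>n. Poly_Mapping.lookup (f n)"] by blast
  have "g 0 < g 1" using g(1) by (simp add: strict_mono_def)
  then show ?thesis using g(2) by blast
qed



locale morder =
  fixes ord :: "('v::finite \<Rightarrow>\<^sub>0 nat) \<Rightarrow> ('v \<Rightarrow>\<^sub>0 nat) \<Rightarrow> bool"
  assumes mo: "monomial_order ord"
begin

lemma irr: "\<not> ord E E" using mo unfolding monomial_order_def by blast
lemma otrans: "ord E F \<Longrightarrow> ord F G \<Longrightarrow> ord E G" using mo unfolding monomial_order_def by blast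
lemma total: "E \<noteq> F \<Longrightarrow> ord E F \<or> ord F E" using mo unfolding monomial_order_def by blast
lemma addL: "ord F E \<Longrightarrow> ord (G + F) (G + E)" using mo unfolding monomial_order_def by blast
lemma var: "ord 0 (Poly_Mapping.single i 1)" using mo unfolding monomial_order_def by blast
lemma asym: "ord E F \<Longrightarrow> \<not> ord F E" using otrans irr by blast

lemma zero_le_add:
  assumes "A = 0 \<or> ord 0 A" "B = 0 \<or> ord 0 B"
  shows "A + B = 0 \<or> ord 0 (A + B)"
proof (cases "A = 0 \<or> B = 0")
  case True then show ?thesis using assms by auto
next
  case False
  then have "ord 0 A" "ord 0 B" using assms by auto
  from addL[OF this(2), of A] have "ord A (A + B)" by simp
  then show ?thesis using \<open>ord 0 A\<close> otrans by blast
qed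

lemma zero_le_single: "Poly_Mapping.single i n = 0 \<or> ord 0 (Poly_Mapping.single i n)"
proof (induction n)
  case 0 then show ?case by simp
next
  case (Suc n)
  have "Poly_Mapping.single i (Suc n) = Poly_Mapping.single i n + Poly_Mapping.single i 1"
    by (simp add: single_add[symmetric])
  then show ?case using zero_le_add[OF Suc.IH] var by auto
qed

lemma zero_le: "G = 0 \<or> ord 0 G"
proof (induction G rule: pm_induct)
  case zero then show ?case by simp
next
  case (add f a b)
  then show ?case using zero_le_add zero_le_single by blast
qed

lemma le_add: "H = 0 \<or> ord F (F + H)"
  using zero_le[of H] addL[of 0 H F] by auto

lemma wf_ord: "wf {(F, E). ord F E}"
  unfolding wf_iff_no_infinite_down_chain
proof
  assume "\<exists>f. \<forall>i. (f (Suc i), f i) \<in> {(F, E). ord F E}"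
  then obtain f where f: "\<And>i. ord (f (Suc i)) (f i)" by auto
  have lt: "i < j \<Longrightarrow> ord (f j) (f i)" for i j
  proof (induction j)
    case 0 then show ?case by simp
  next
    case (Suc j)
    show ?case
    proof (cases "i = j")
      case True then show ?thesis using f by simp
    next
      case False
      then have "ord (f j) (f i)" using Suc by simp
      then show ?thesis using f[of j] otrans by blast
    qed
  qed
  obtain i j where ij: "i < j" "\<And>v. Poly_Mapping.lookup (f i) v \<le> Poly_Mapping.lookup (f j) v"
    using dickson[of f] by blast
  have eq: "f i + (f j - f i) = f j"
    by (rule poly_mapping_eqI) (simp add: lookup_add lookup_minus ij(2))
  from le_add[of "f j - f i" "f i"] eq have "f j - f i = 0 \<or> ord (f i) (f j)" by simp
  then show False
  proof
    assume "f j - f i = 0"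
    then have "f j = f i" using eq by simp
    then show False using lt[OF ij(1)] irr by simp
  next
    assume "ord (f i) (f j)"
    then show False using lt[OF ij(1)] asym by blast
  qed
qed

lemma max_exists: "finite K \<Longrightarrow> K \<noteq> {} \<Longrightarrow> \<exists>E\<in>K. \<forall>F\<in>K. F \<noteq> E \<longrightarrow> ord F E"
proof (induction K rule: finite_ne_induct)
  case (singleton x) then show ?case by simp
next
  case (insert x K)
  then obtain E where E: "E \<in> K" "\<forall>F\<in>K. F \<noteq> E \<longrightarrow> ord F E" by blast
  show ?case
  proof (cases "ord x E")
    case True then show ?thesis using E by auto
  next
    case False
    have "x \<noteq> E" using E(1) insert.hyps by auto
    then have xE: "ord E x" using total False by blast
    have "\<forall>F\<in>insert x K. F \<noteq> x \<longrightarrow> ord F x"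
    proof (intro ballI impI)
      fix F assume "F \<in> insert x K" "F \<noteq> x"
      then have "F \<in> K" by simp
      then show "ord F x" using E(2) xE otrans by (cases "F = E") blast+
    qed
    then show ?thesis by blast
  qed
qed

lemma lead_unique: "E \<in> K \<Longrightarrow> \<forall>F\<in>K. F \<noteq> E \<longrightarrow> ord F E \<Longrightarrow> E' \<in> K \<Longrightarrow> \<forall>F\<in>K. F \<noteq> E' \<longrightarrow> ord F E' \<Longrightarrow> E = E'"
proof (rule ccontr)
  assume a: "E \<in> K" "\<forall>F\<in>K. F \<noteq> E \<longrightarrow> ord F E" "E' \<in> K" "\<forall>F\<in>K. F \<noteq> E' \<longrightarrow> ord F E'" "E \<noteq> E'"
  then have "ord E' E" "ord E E'" by auto
  then show False using asym by blast
qed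

lemma lead_exp_prop:
  assumes "f \<noteq> 0"
  shows "lead_exp ord f \<in> Poly_Mapping.keys f \<and> (\<forall>F\<in>Poly_Mapping.keys f. F \<noteq> lead_exp ord f \<longrightarrow> ord F (lead_exp ord f))"
proof -
  have "Poly_Mapping.keys f \<noteq> {}" using assms by simp
  then obtain E where E: "E \<in> Poly_Mapping.keys f" "\<forall>F\<in>Poly_Mapping.keys f. F \<noteq> E \<longrightarrow> ord F E"
    using max_exists[of "Poly_Mapping.keys f"] by auto
  show ?thesis unfolding lead_exp_def
  proof (rule theI[of _ E])
    show "E \<in> Poly_Mapping.keys f \<and> (\<forall>F\<in>Poly_Mapping.keys f. F \<noteq> E \<longrightarrow> ord F E)" using E by blast
  next
    fix x assume "x \<in> Poly_Mapping.keys f \<and> (\<forall>F\<in>Poly_Mapping.keys f. F \<noteq> x \<longrightarrow> ord F x)"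
    then show "x = E" using E lead_unique[of x "Poly_Mapping.keys f" E] by blast
  qed
qed

lemma lead_exp_eqI:
  assumes "E \<in> Poly_Mapping.keys f" "\<forall>F\<in>Poly_Mapping.keys f. F \<noteq> E \<longrightarrow> ord F E"
  shows "lead_exp ord f = E"
  unfolding lead_exp_def
proof (rule the_equality)
  show "E \<in> Poly_Mapping.keys f \<and> (\<forall>F\<in>Poly_Mapping.keys f. F \<noteq> E \<longrightarrow> ord F E)" using assms by blast
next
  fix x assume "x \<in> Poly_Mapping.keys f \<and> (\<forall>F\<in>Poly_Mapping.keys f. F \<noteq> x \<longrightarrow> ord F x)"
  then show "x = E" using assms lead_unique[of x "Poly_Mapping.keys f" E] by blast
qed

lemma lead_exp_keys_eq: "Poly_Mapping.keys f = Poly_Mapping.keys g \<Longrightarrow> lead_exp ord f = lead_exp ord g"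
  unfolding lead_exp_def by simp

end



locale rhom =
  fixes \<phi> :: "'a::comm_ring_1 \<Rightarrow> 'k::comm_ring_1"
  assumes hadd: "\<phi> (a + b) = \<phi> a + \<phi> b" and hmult: "\<phi> (a * b) = \<phi> a * \<phi> b" and hone: "\<phi> 1 = 1"
begin

lemma hzero[simp]: "\<phi> 0 = 0" using hadd[of 0 0] by simp
lemma hdiff: "\<phi> (a - b) = \<phi> a - \<phi> b"
  using hadd[of "a - b" b] by (simp add: algebra_simps)

lemma Phi_lookup: "Poly_Mapping.lookup (Poly_Mapping.map \<phi> f) k = \<phi> (Poly_Mapping.lookup f k)"
  by (simp add: lookup_map0)

lemma Phi_add: "Poly_Mapping.map \<phi> (f + g) = Poly_Mapping.map \<phi> f + Poly_Mapping.map \<phi> g"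
  by (rule poly_mapping_eqI) (simp add: Phi_lookup lookup_add hadd)

lemma Phi_diff: "Poly_Mapping.map \<phi> (f - g) = Poly_Mapping.map \<phi> f - Poly_Mapping.map \<phi> g"
  by (rule poly_mapping_eqI) (simp add: Phi_lookup lookup_minus hdiff)

lemma Phi_zero[simp]: "Poly_Mapping.map \<phi> 0 = 0"
  by (rule poly_mapping_eqI) (simp add: Phi_lookup)

lemma Phi_single: "Poly_Mapping.map \<phi> (Poly_Mapping.single k a) = Poly_Mapping.single k (\<phi> a)"
  by simp

lemma Phi_keys: "Poly_Mapping.keys (Poly_Mapping.map \<phi> f) \<subseteq> Poly_Mapping.keys f"
  by (rule keys_map_sub) simp

lemma Phi_single_mult:
  "Poly_Mapping.map \<phi> (Poly_Mapping.single A b * g) = Poly_Mapping.single A (\<phi> b) * Poly_Mapping.map \<phi> (g :: ('v \<Rightarrow>\<^sub>0 nat) \<Rightarrow>\<^sub>0 'a)"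
proof (induction g rule: pm_induct)
  case zero then show ?case by simp
next
  case (add g C d)
  have "Poly_Mapping.single A b * (g + Poly_Mapping.single C d) = Poly_Mapping.single A b * g + Poly_Mapping.single (A + C) (b * d)"
    by (simp add: distrib_left mult_single)
  then show ?case using add.IH by (simp add: Phi_add distrib_left mult_single hmult)
qed

lemma Phi_mult:
  "Poly_Mapping.map \<phi> (f * g) = Poly_Mapping.map \<phi> f * Poly_Mapping.map \<phi> (g :: ('v \<Rightarrow>\<^sub>0 nat) \<Rightarrow>\<^sub>0 'a)"
proof (induction f rule: pm_induct)
  case zero then show ?case by simp
next
  case (add f A b)
  then show ?case by (simp add: distrib_right Phi_add Phi_single_mult)
qed

end

locale setting = morder ord
  for ord :: "('v::finite \<Rightarrow>\<^sub>0 nat) \<Rightarrow> ('v \<Rightarrow>\<^sub>0 nat) \<Rightarrow> bool" +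
  fixes I :: "('v, 'a::comm_ring_1) mpoly set" and p :: "'a set" and \<phi> :: "'a \<Rightarrow> 'k::field"
  assumes I: "is_ideal I" and pr: "prime_ideal p" and kp: "is_loc_quot p p \<phi>"
begin

sublocale rhom \<phi>
proof
  show "\<phi> (a + b) = \<phi> a + \<phi> b" for a b using kp unfolding is_loc_quot_def by blast
  show "\<phi> (a * b) = \<phi> a * \<phi> b" for a b using kp unfolding is_loc_quot_def by blast
  have "\<phi> 1 * 1 = 1" using kp unfolding is_loc_quot_def by blast
  then show "\<phi> 1 = 1" by simp
qed

lemma p_ideal: "is_ideal p" using pr unfolding prime_ideal_def by blast
lemma one_notin: "1 \<notin> p" using pr unfolding prime_ideal_def by blast
lemma p_prime: "a * b \<in> p \<Longrightarrow> a \<in> p \<or> b \<in> p" using pr unfolding prime_ideal_def by blast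
lemma notin_mult: "s \<notin> p \<Longrightarrow> t \<notin> p \<Longrightarrow> s * t \<notin> p" using p_prime by blast
lemma zero_in_p: "0 \<in> p" using ideal_0[OF p_ideal] .

lemma phi_zero_iff: "\<phi> a = 0 \<longleftrightarrow> a \<in> p"
proof
  assume "\<phi> a = 0"
  then obtain s where "s \<notin> p" "s * a \<in> p" using kp unfolding is_loc_quot_def by blast
  then show "a \<in> p" using p_prime by blast
next
  assume "a \<in> p"
  then have "1 \<notin> p \<and> 1 * a \<in> p" using one_notin by simp
  then show "\<phi> a = 0" using kp unfolding is_loc_quot_def by blast
qed

lemma phi_frac: "\<exists>a s. s \<notin> p \<and> y * \<phi> s = \<phi> a"
  using kp unfolding is_loc_quot_def by blast

lemma denominators:
  "\<exists>r' t. t \<notin> p \<and> Poly_Mapping.map \<phi> r' = Poly_Mapping.single 0 (\<phi> t) * (r :: ('v \<Rightarrow>\<^sub>0 nat) \<Rightarrow>\<^sub>0 'k)"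
proof (induction r rule: pm_induct)
  case zero
  have "Poly_Mapping.map \<phi> 0 = Poly_Mapping.single 0 (\<phi> 1) * (0 :: ('v \<Rightarrow>\<^sub>0 nat) \<Rightarrow>\<^sub>0 'k)" by simp
  then show ?case using one_notin by blast
next
  case (add r A b)
  then obtain r' t where rt: "t \<notin> p" "Poly_Mapping.map \<phi> r' = Poly_Mapping.single 0 (\<phi> t) * r" by blast
  obtain a0 s0 where as: "s0 \<notin> p" "b * \<phi> s0 = \<phi> a0" using phi_frac by blast
  define r'' where "r'' = Poly_Mapping.single 0 s0 * r' + Poly_Mapping.single A (a0 * t)"
  have "Poly_Mapping.map \<phi> r'' = Poly_Mapping.single 0 (\<phi> s0) * (Poly_Mapping.single 0 (\<phi> t) * r) + Poly_Mapping.single A (\<phi> a0 * \<phi> t)"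
    unfolding r''_def by (simp add: Phi_add Phi_single_mult rt(2) hmult)
  also have "\<dots> = Poly_Mapping.single 0 (\<phi> (t * s0)) * (r + Poly_Mapping.single A b)"
    by (simp add: distrib_left mult_single hmult as(2)[symmetric] algebra_simps)
  finally show ?case using notin_mult[OF rt(1) as(1)] by blast
qed

lemma D_lemma:
  assumes "g \<in> ideal_gen (Poly_Mapping.map \<phi> ` I)"
  shows "\<exists>f\<in>I. \<exists>s. s \<notin> p \<and> Poly_Mapping.map \<phi> f = Poly_Mapping.single 0 (\<phi> s) * g"
proof -
  let ?D = "{g. \<exists>f\<in>I. \<exists>s. s \<notin> p \<and> Poly_Mapping.map \<phi> f = Poly_Mapping.single 0 (\<phi> s) * g}"
  have "is_ideal ?D"
    unfolding is_ideal_def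
  proof (intro conjI ballI allI)
    show "0 \<in> ?D" using ideal_0[OF I] one_notin by force
  next
    fix x y assume "x \<in> ?D" "y \<in> ?D"
    then obtain f1 s1 f2 s2 where a: "f1 \<in> I" "s1 \<notin> p" "Poly_Mapping.map \<phi> f1 = Poly_Mapping.single 0 (\<phi> s1) * x"
      "f2 \<in> I" "s2 \<notin> p" "Poly_Mapping.map \<phi> f2 = Poly_Mapping.single 0 (\<phi> s2) * y" by blast
    have "Poly_Mapping.single 0 s2 * f1 + Poly_Mapping.single 0 s1 * f2 \<in> I"
      using a I by (simp add: ideal_add ideal_mult)
    moreover have "Poly_Mapping.map \<phi> (Poly_Mapping.single 0 s2 * f1 + Poly_Mapping.single 0 s1 * f2)
       = Poly_Mapping.single 0 (\<phi> (s1 * s2)) * (x + y)"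
    proof -
      have e: "Poly_Mapping.single 0 u * (Poly_Mapping.single 0 v * z) = Poly_Mapping.single 0 (v * u) * z"
        for u v :: 'k and z :: "('v \<Rightarrow>\<^sub>0 nat) \<Rightarrow>\<^sub>0 'k"
        by (simp only: mult.assoc[symmetric] mult_single add_0 mult.commute[of u v])
      have "Poly_Mapping.map \<phi> (Poly_Mapping.single 0 s2 * f1) = Poly_Mapping.single 0 (\<phi> s1 * \<phi> s2) * x"
        by (simp only: Phi_single_mult a e)
      moreover have "Poly_Mapping.map \<phi> (Poly_Mapping.single 0 s1 * f2) = Poly_Mapping.single 0 (\<phi> s1 * \<phi> s2) * y"
        by (simp only: Phi_single_mult a e mult.commute[of "\<phi> s2"])
      ultimately show ?thesis
        by (simp only: Phi_add hmult distrib_left)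
    qed
    ultimately show "x + y \<in> ?D" using notin_mult[OF a(2) a(5)] by blast
  next
    fix r x :: "('v \<Rightarrow>\<^sub>0 nat) \<Rightarrow>\<^sub>0 'k" assume "x \<in> ?D"
    then obtain f s where a: "f \<in> I" "s \<notin> p" "Poly_Mapping.map \<phi> f = Poly_Mapping.single 0 (\<phi> s) * x" by blast
    obtain r' t where rt: "t \<notin> p" "Poly_Mapping.map \<phi> r' = Poly_Mapping.single 0 (\<phi> t) * r"
      using denominators[of r] by blast
    have "r' * f \<in> I" using a I by (simp add: ideal_mult)
    moreover have "Poly_Mapping.map \<phi> (r' * f) = Poly_Mapping.single 0 (\<phi> (t * s)) * (r * x)"
      by (simp add: Phi_mult rt a hmult ac_simps mult_single)
    ultimately show "r * x \<in> ?D" using notin_mult[OF rt(1) a(2)] by blast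
  qed
  moreover have "Poly_Mapping.map \<phi> ` I \<subseteq> ?D"
  proof
    fix g assume "g \<in> Poly_Mapping.map \<phi> ` I"
    then obtain f where "f \<in> I" "g = Poly_Mapping.map \<phi> f" by blast
    moreover have "Poly_Mapping.single 0 (\<phi> 1) * g = g" by (simp add: hone)
    ultimately show "g \<in> ?D" using one_notin by force
  qed
  ultimately show ?thesis using ideal_gen_least assms by blast
qed

end


context setting
begin

definition Lc :: "('v \<Rightarrow>\<^sub>0 nat) \<Rightarrow> 'a set" where
  "Lc F = {c. \<exists>h\<in>I. Poly_Mapping.lookup h F = c \<and> (\<forall>G\<in>Poly_Mapping.keys h. G = F \<or> ord G F)}"

lemma Lc_0: "0 \<in> Lc F"
  unfolding Lc_def using ideal_0[OF I] by force

lemma Lc_ideal: "is_ideal (Lc F)"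
  unfolding is_ideal_def
proof (intro conjI ballI allI)
  show "0 \<in> Lc F" by (rule Lc_0)
next
  fix x y assume "x \<in> Lc F" "y \<in> Lc F"
  then obtain h1 h2 where a: "h1 \<in> I" "Poly_Mapping.lookup h1 F = x" "\<forall>G\<in>Poly_Mapping.keys h1. G = F \<or> ord G F"
    "h2 \<in> I" "Poly_Mapping.lookup h2 F = y" "\<forall>G\<in>Poly_Mapping.keys h2. G = F \<or> ord G F"
    unfolding Lc_def by blast
  have "h1 + h2 \<in> I" using a I by (simp add: ideal_add)
  moreover have "Poly_Mapping.lookup (h1 + h2) F = x + y" using a by (simp add: lookup_add)
  moreover have "\<forall>G\<in>Poly_Mapping.keys (h1 + h2). G = F \<or> ord G F"
    using a keys_add[of h1 h2] by blast
  ultimately show "x + y \<in> Lc F" unfolding Lc_def by blast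
next
  fix r x assume "x \<in> Lc F"
  then obtain h where a: "h \<in> I" "Poly_Mapping.lookup h F = x" "\<forall>G\<in>Poly_Mapping.keys h. G = F \<or> ord G F"
    unfolding Lc_def by blast
  have "Poly_Mapping.single 0 r * h \<in> I" using a I by (simp add: ideal_mult)
  moreover have "Poly_Mapping.lookup (Poly_Mapping.single 0 r * h) F = r * x" using a by (simp add: lookup_smult)
  moreover have "\<forall>G\<in>Poly_Mapping.keys (Poly_Mapping.single 0 r * h). G = F \<or> ord G F"
    using a keys_smult[of r h] by blast
  ultimately show "r * x \<in> Lc F" unfolding Lc_def by blast
qed

lemma Lc_shift:
  assumes "b \<in> Lc B" shows "a * b \<in> Lc (A + B)"
proof -
  obtain h where h: "h \<in> I" "Poly_Mapping.lookup h B = b" "\<forall>G\<in>Poly_Mapping.keys h. G = B \<or> ord G B"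
    using assms unfolding Lc_def by blast
  have "Poly_Mapping.single A a * h \<in> I" using h I by (simp add: ideal_mult)
  moreover have "Poly_Mapping.lookup (Poly_Mapping.single A a * h) (A + B) = a * b"
    using h by (simp add: lookup_single_mult)
  moreover have "\<forall>G\<in>Poly_Mapping.keys (Poly_Mapping.single A a * h). G = A + B \<or> ord G (A + B)"
  proof
    fix G assume "G \<in> Poly_Mapping.keys (Poly_Mapping.single A a * h)"
    then obtain G' where "G = A + G'" "G' \<in> Poly_Mapping.keys h" using keys_single_mult by blast
    then have "G' = B \<or> ord G' B" using h(3) by blast
    then show "G = A + B \<or> ord G (A + B)" using addL[of G' B A] \<open>G = A + G'\<close> by blast
  qed
  ultimately show ?thesis unfolding Lc_def by blast
qed

definition Mset :: "('v, 'a) mpoly set" where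
  "Mset = {q. \<forall>G. Poly_Mapping.lookup q G \<in> Lc G}"

lemma Mset_add: "q1 \<in> Mset \<Longrightarrow> q2 \<in> Mset \<Longrightarrow> q1 + q2 \<in> Mset"
  unfolding Mset_def by (simp add: lookup_add ideal_add[OF Lc_ideal])

lemma Mset_single: "Poly_Mapping.single B b \<in> Mset \<longleftrightarrow> b \<in> Lc B"
proof
  assume "Poly_Mapping.single B b \<in> Mset"
  then have "Poly_Mapping.lookup (Poly_Mapping.single B b) B \<in> Lc B" unfolding Mset_def by blast
  then show "b \<in> Lc B" by simp
next
  assume "b \<in> Lc B"
  have "Poly_Mapping.lookup (Poly_Mapping.single B b) G \<in> Lc G" for G
    using \<open>b \<in> Lc B\<close> Lc_0 by (cases "B = G") (simp_all add: lookup_single_not_eq)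
  then show "Poly_Mapping.single B b \<in> Mset" unfolding Mset_def by blast
qed

lemma Mset_single_mult: "q \<in> Mset \<Longrightarrow> Poly_Mapping.single A a * q \<in> Mset"
proof (induction q rule: pm_induct)
  case zero then show ?case by (simp add: Mset_def Lc_0)
next
  case (add q B b)
  have q: "q \<in> Mset"
    unfolding Mset_def mem_Collect_eq
  proof (rule allI)
    fix G
    show "Poly_Mapping.lookup q G \<in> Lc G"
    proof (cases "G = B")
      case True then show ?thesis using add.hyps(1) Lc_0 by (simp add: in_keys_iff)
    next
      case False
      then have "Poly_Mapping.lookup q G = Poly_Mapping.lookup (q + Poly_Mapping.single B b) G"
        by (simp add: lookup_add lookup_single_not_eq)
      then show ?thesis using add.prems unfolding Mset_def by simp
    qed
  qed
  have "Poly_Mapping.lookup (q + Poly_Mapping.single B b) B = b"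
    using add.hyps(1) by (simp add: lookup_add in_keys_iff)
  moreover have "Poly_Mapping.lookup (q + Poly_Mapping.single B b) B \<in> Lc B" using add.prems unfolding Mset_def by blast
  ultimately have "b \<in> Lc B" by simp
  then have "Poly_Mapping.single (A + B) (a * b) \<in> Mset" using Mset_single Lc_shift by blast
  moreover have "Poly_Mapping.single A a * (q + Poly_Mapping.single B b) = Poly_Mapping.single A a * q + Poly_Mapping.single (A + B) (a * b)"
    by (simp add: distrib_left mult_single)
  ultimately show ?case using add.IH[OF q] Mset_add by simp
qed

lemma Mset_mult: "q \<in> Mset \<Longrightarrow> r * q \<in> Mset"
proof (induction r rule: pm_induct)
  case zero then show ?case by (simp add: Mset_def Lc_0)
next
  case (add r A a)
  then show ?case using Mset_single_mult Mset_add by (simp add: distrib_right)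
qed

lemma Mset_ideal: "is_ideal Mset"
proof -
  have "0 \<in> Mset" by (simp add: Mset_def Lc_0)
  then show ?thesis unfolding is_ideal_def using Mset_add Mset_mult by blast
qed

lemma init_term_Mset:
  assumes "f \<in> I" "f \<noteq> 0" shows "init_term ord f \<in> Mset"
proof -
  let ?E = "lead_exp ord f"
  have "\<forall>G\<in>Poly_Mapping.keys f. G = ?E \<or> ord G ?E" using lead_exp_prop[OF assms(2)] by blast
  then have "Poly_Mapping.lookup f ?E \<in> Lc ?E"
    unfolding Lc_def using assms(1) by blast
  then show ?thesis unfolding init_term_def by (simp add: Mset_single)
qed

lemma init_ideal_Mset: "init_ideal ord I \<subseteq> Mset"
  unfolding init_ideal_def
  by (rule ideal_gen_least[OF Mset_ideal]) (use init_term_Mset in blast)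

lemma coeff_Lc: "c \<in> coeff_ideal (init_ideal ord I) F \<Longrightarrow> c \<in> Lc F"
  unfolding coeff_ideal_def
proof -
  have "{c. Poly_Mapping.single F c \<in> init_ideal ord I} \<subseteq> Lc F"
  proof
    fix c assume "c \<in> {c. Poly_Mapping.single F c \<in> init_ideal ord I}"
    then have "Poly_Mapping.single F c \<in> Mset" using init_ideal_Mset by blast
    then show "c \<in> Lc F" using Mset_single by simp
  qed
  then show "c \<in> ideal_gen {c. Poly_Mapping.single F c \<in> init_ideal ord I} \<Longrightarrow> c \<in> Lc F"
    using ideal_gen_least[OF Lc_ideal, of _ F] by blast
qed

lemma Lc_init:
  assumes "c \<in> Lc F" "c \<notin> p"
  shows "\<exists>h\<in>I. h \<noteq> 0 \<and> lead_exp ord h = F \<and> Poly_Mapping.lookup h F = c"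
proof -
  obtain h where h: "h \<in> I" "Poly_Mapping.lookup h F = c" "\<forall>G\<in>Poly_Mapping.keys h. G = F \<or> ord G F"
    using assms unfolding Lc_def by blast
  have "c \<noteq> 0" using assms(2) zero_in_p by auto
  then have F: "F \<in> Poly_Mapping.keys h" using h(2) by (simp add: in_keys_iff)
  then have "h \<noteq> 0" by (metis keys_zero empty_iff)
  moreover have "\<forall>G\<in>Poly_Mapping.keys h. G \<noteq> F \<longrightarrow> ord G F" using h(3) by blast
  then have "lead_exp ord h = F" using lead_exp_eqI[OF F] by blast
  ultimately show ?thesis using h by blast
qed

lemma init_in: "f \<in> I \<Longrightarrow> f \<noteq> 0 \<Longrightarrow> init_term ord f \<in> init_ideal ord I"
proof -
  assume "f \<in> I" "f \<noteq> 0"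
  then have "init_term ord f \<in> {init_term ord f | f. f \<in> I \<and> f \<noteq> 0}" by blast
  then show ?thesis unfolding init_ideal_def using ideal_gen_sup by (rule subsetD[rotated])
qed

end


lemma init_in_gen: "f \<in> S \<Longrightarrow> f \<noteq> 0 \<Longrightarrow> init_term ord f \<in> init_ideal ord S"
proof -
  assume "f \<in> S" "f \<noteq> 0"
  then have "init_term ord f \<in> {init_term ord f | f. f \<in> S \<and> f \<noteq> 0}" by blast
  then show ?thesis unfolding init_ideal_def using ideal_gen_sup by (rule subsetD[rotated])
qed

context setting
begin

lemma Q_arg:
  fixes \<psi> :: "'a \<Rightarrow> 'b::comm_ring"
  assumes B: "is_loc_quot p (contract I) \<psi>"
    and Kp: "contract I \<subseteq> p"
    and U: "ideal_gen (\<psi> ` J) = UNIV"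
  shows "\<exists>c\<in>J. c \<notin> p"
proof (rule ccontr)
  assume "\<not> (\<exists>c\<in>J. c \<notin> p)"
  then have Jp: "J \<subseteq> p" by blast
  have one: "\<psi> 1 * y = y" for y using B unfolding is_loc_quot_def by blast
  have padd: "\<psi> (a + b) = \<psi> a + \<psi> b" for a b using B unfolding is_loc_quot_def by blast
  have pmult: "\<psi> (a * b) = \<psi> a * \<psi> b" for a b using B unfolding is_loc_quot_def by blast
  have frac: "\<exists>a s. s \<notin> p \<and> y * \<psi> s = \<psi> a" for y using B unfolding is_loc_quot_def by blast
  have ker: "\<psi> a = 0 \<Longrightarrow> \<exists>s. s \<notin> p \<and> s * a \<in> contract I" for a using B unfolding is_loc_quot_def by blast
  have p0: "\<psi> 0 = 0" using padd[of 0 0] by simp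
  let ?Q = "{y. \<exists>a s. a \<in> p \<and> s \<notin> p \<and> y * \<psi> s = \<psi> a}"
  have "is_ideal ?Q"
    unfolding is_ideal_def
  proof (intro conjI ballI allI)
    have "(0::'b) * \<psi> 1 = \<psi> 0" by (simp add: p0)
    then show "0 \<in> ?Q" using zero_in_p one_notin by blast
  next
    fix x y assume "x \<in> ?Q" "y \<in> ?Q"
    then obtain a1 s1 a2 s2 where a: "a1 \<in> p" "s1 \<notin> p" "x * \<psi> s1 = \<psi> a1" "a2 \<in> p" "s2 \<notin> p" "y * \<psi> s2 = \<psi> a2"
      by blast
    have "(x + y) * \<psi> (s1 * s2) = (x * \<psi> s1) * \<psi> s2 + (y * \<psi> s2) * \<psi> s1"
      by (simp add: pmult algebra_simps)
    also have "\<dots> = \<psi> (a1 * s2 + a2 * s1)" by (simp add: a padd pmult)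
    finally have "(x + y) * \<psi> (s1 * s2) = \<psi> (a1 * s2 + a2 * s1)" .
    moreover have "a1 * s2 + a2 * s1 \<in> p"
    proof -
      have "s2 * a1 \<in> p" "s1 * a2 \<in> p" using a p_ideal by (simp_all add: ideal_mult)
      then show ?thesis using p_ideal by (simp add: ideal_add mult.commute)
    qed
    ultimately show "x + y \<in> ?Q" using notin_mult[OF a(2) a(5)] by blast
  next
    fix r x assume "x \<in> ?Q"
    then obtain a s where a: "a \<in> p" "s \<notin> p" "x * \<psi> s = \<psi> a" by blast
    obtain b t where bt: "t \<notin> p" "r * \<psi> t = \<psi> b" using frac by blast
    have "(r * x) * \<psi> (t * s) = (r * \<psi> t) * (x * \<psi> s)" by (simp add: pmult algebra_simps)
    also have "\<dots> = \<psi> (b * a)" by (simp add: a bt pmult)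
    finally have "(r * x) * \<psi> (t * s) = \<psi> (b * a)" .
    moreover have "b * a \<in> p" using a p_ideal by (simp add: ideal_mult)
    ultimately show "r * x \<in> ?Q" using notin_mult[OF bt(1) a(2)] by blast
  qed
  moreover have "\<psi> ` J \<subseteq> ?Q"
  proof
    fix y assume "y \<in> \<psi> ` J"
    then obtain c where c: "c \<in> J" "y = \<psi> c" by blast
    have "y * \<psi> 1 = \<psi> c" using c one[of y] by (simp add: mult.commute)
    then show "y \<in> ?Q" using c Jp one_notin by blast
  qed
  ultimately have "ideal_gen (\<psi> ` J) \<subseteq> ?Q" by (rule ideal_gen_least)
  then have "\<psi> 1 \<in> ?Q" using U by blast
  then obtain a s where a: "a \<in> p" "s \<notin> p" "\<psi> 1 * \<psi> s = \<psi> a" by blast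
  then have "\<psi> s = \<psi> a" using one by simp
  moreover have "\<psi> s = \<psi> (s - a) + \<psi> a" using padd[of "s - a" a] by simp
  ultimately have "\<psi> (s - a) = 0" by simp
  then obtain t where t: "t \<notin> p" "t * (s - a) \<in> contract I" using ker by blast
  then have "t * (s - a) \<in> p" using Kp by blast
  then have "s - a \<in> p" using t(1) p_prime by blast
  then have "(s - a) + a \<in> p" using a(1) p_ideal ideal_add by blast
  then show False using a(2) by simp
qed

end


context setting
begin

lemma phi_p: "a \<in> p \<Longrightarrow> \<phi> a = 0" using phi_zero_iff by blast

lemma reduce:
  fixes \<psi> :: "'a \<Rightarrow> 'b::comm_ring"
  assumes B: "is_loc_quot p (contract I) \<psi>"
    and Kp: "contract I \<subseteq> p"
    and hyp: "\<forall>E. ideal_gen (\<psi> ` coeff_ideal (init_ideal ord I) E) = {0}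
            \<or> ideal_gen (\<psi> ` coeff_ideal (init_ideal ord I) E) = UNIV"
    and d: "Poly_Mapping.single F d \<in> init_ideal ord I"
  shows "\<exists>c e h. h \<in> I \<and> (\<forall>G\<in>Poly_Mapping.keys h. G = F \<or> ord G F) \<and> c \<notin> p
     \<and> c * d = e * Poly_Mapping.lookup h F
     \<and> (d \<in> p \<longrightarrow> Poly_Mapping.map \<phi> (Poly_Mapping.single 0 e * h) = 0)"
proof -
  let ?J = "coeff_ideal (init_ideal ord I) F"
  have "d \<in> {c. Poly_Mapping.single F c \<in> init_ideal ord I}" using d by simp
  then have dJ: "d \<in> ?J" unfolding coeff_ideal_def using ideal_gen_sup by (rule subsetD[rotated])
  from hyp have "ideal_gen (\<psi> ` ?J) = {0} \<or> ideal_gen (\<psi> ` ?J) = UNIV" by blast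
  then show ?thesis
  proof
    assume Z: "ideal_gen (\<psi> ` ?J) = {0}"
    have "\<psi> d \<in> \<psi> ` ?J" using dJ by (rule imageI)
    then have "\<psi> d \<in> ideal_gen (\<psi> ` ?J)" using ideal_gen_sup by (rule subsetD[rotated])
    then have "\<psi> d = 0" using Z by simp
    then obtain s where s: "s \<notin> p" "s * d \<in> contract I" using B unfolding is_loc_quot_def by blast
    then have s0: "Poly_Mapping.single 0 (s * d) \<in> I" unfolding contract_def by blast
    define h where "h = Poly_Mapping.single F (s * d)"
    have "h = Poly_Mapping.single F 1 * Poly_Mapping.single 0 (s * d)" unfolding h_def by (simp add: mult_single)
    then have hI: "h \<in> I" using s0 I by (simp add: ideal_mult)
    have hk: "\<forall>G\<in>Poly_Mapping.keys h. G = F \<or> ord G F" unfolding h_def by simp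
    have "s * d = 1 * Poly_Mapping.lookup h F" unfolding h_def by simp
    moreover have "d \<in> p \<longrightarrow> Poly_Mapping.map \<phi> (Poly_Mapping.single 0 1 * h) = 0"
      unfolding h_def by (simp add: hmult phi_p)
    ultimately show ?thesis using hI hk s(1)
      by (intro exI[of _ s] exI[of _ 1] exI[of _ h]) simp
  next
    assume U: "ideal_gen (\<psi> ` ?J) = UNIV"
    obtain c where c: "c \<in> ?J" "c \<notin> p" using Q_arg[OF B Kp U] by blast
    then have "c \<in> Lc F" using coeff_Lc by blast
    then obtain h where h: "h \<in> I" "Poly_Mapping.lookup h F = c" "\<forall>G\<in>Poly_Mapping.keys h. G = F \<or> ord G F"
      unfolding Lc_def by blast
    have "c * d = d * Poly_Mapping.lookup h F" using h(2) by (simp add: mult.commute)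
    moreover have "d \<in> p \<longrightarrow> Poly_Mapping.map \<phi> (Poly_Mapping.single 0 d * h) = 0"
      by (simp add: Phi_single_mult phi_p)
    ultimately show ?thesis using h c(2)
      by (intro exI[of _ c] exI[of _ d] exI[of _ h]) simp
  qed
qed

lemma key:
  fixes \<psi> :: "'a \<Rightarrow> 'b::comm_ring"
  assumes B: "is_loc_quot p (contract I) \<psi>"
    and hyp: "\<forall>E. ideal_gen (\<psi> ` coeff_ideal (init_ideal ord I) E) = {0}
            \<or> ideal_gen (\<psi> ` coeff_ideal (init_ideal ord I) E) = UNIV"
    and f: "f \<in> I" "Poly_Mapping.map \<phi> f \<noteq> 0"
  shows "\<exists>c\<in>Lc (lead_exp ord (Poly_Mapping.map \<phi> f)). c \<notin> p"
proof (cases "contract I \<subseteq> p")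
  case False
  then obtain k where k: "k \<in> contract I" "k \<notin> p" by blast
  let ?E = "lead_exp ord (Poly_Mapping.map \<phi> f)"
  have k0: "Poly_Mapping.single 0 k \<in> I" using k(1) unfolding contract_def by blast
  have "Poly_Mapping.single ?E k = Poly_Mapping.single ?E 1 * Poly_Mapping.single 0 k" by (simp add: mult_single)
  then have "Poly_Mapping.single ?E k \<in> I" using k0 I by (simp add: ideal_mult)
  moreover have "\<forall>G\<in>Poly_Mapping.keys (Poly_Mapping.single ?E k). G = ?E \<or> ord G ?E" by simp
  ultimately have "k \<in> Lc ?E" unfolding Lc_def by force
  then show ?thesis using k(2) by blast
next
  case Kp: True
  define E where "E = lead_exp ord (Poly_Mapping.map \<phi> f)"
  have main: "\<forall>f. f \<in> I \<longrightarrow> f \<noteq> 0 \<longrightarrow> lead_exp ord f = F \<longrightarrow> Poly_Mapping.map \<phi> f \<noteq> 0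
      \<longrightarrow> lead_exp ord (Poly_Mapping.map \<phi> f) = E \<longrightarrow> (\<exists>c\<in>Lc E. c \<notin> p)" for F
    using wf_ord
  proof (induction F rule: wf_induct_rule)
    case (less F)
    show ?case
    proof (intro allI impI)
      fix f assume fI: "f \<in> I" and f0: "f \<noteq> 0" and fF: "lead_exp ord f = F"
        and Pf0: "Poly_Mapping.map \<phi> f \<noteq> 0" and PfE: "lead_exp ord (Poly_Mapping.map \<phi> f) = E"
      let ?d = "Poly_Mapping.lookup f F"
      have lf: "F \<in> Poly_Mapping.keys f" "\<forall>G\<in>Poly_Mapping.keys f. G \<noteq> F \<longrightarrow> ord G F"
        using lead_exp_prop[OF f0] unfolding fF by blast+
      show "\<exists>c\<in>Lc E. c \<notin> p"
      proof (cases "?d \<in> p")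
        case False
        then have "\<phi> ?d \<noteq> 0" using phi_zero_iff by blast
        then have FP: "F \<in> Poly_Mapping.keys (Poly_Mapping.map \<phi> f)" by (simp add: in_keys_iff Phi_lookup)
        have "\<forall>G\<in>Poly_Mapping.keys (Poly_Mapping.map \<phi> f). G \<noteq> F \<longrightarrow> ord G F"
          using lf(2) Phi_keys[of f] by (meson subsetD)
        then have "lead_exp ord (Poly_Mapping.map \<phi> f) = F" using lead_exp_eqI[OF FP] by blast
        then have EF: "E = F" using PfE by simp
        have "\<forall>G\<in>Poly_Mapping.keys f. G = F \<or> ord G F" using lf(2) by blast
        then have "?d \<in> Lc F" unfolding Lc_def using fI by (intro CollectI bexI[of _ f]) simp_all
        then show ?thesis using False EF by blast
      next
        case True
        have "init_term ord f \<in> init_ideal ord I" using init_in[OF fI f0] .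
        then have "Poly_Mapping.single F ?d \<in> init_ideal ord I" unfolding init_term_def fF .
        then obtain c e h where ceh: "h \<in> I" "\<forall>G\<in>Poly_Mapping.keys h. G = F \<or> ord G F" "c \<notin> p"
          "c * ?d = e * Poly_Mapping.lookup h F" "Poly_Mapping.map \<phi> (Poly_Mapping.single 0 e * h) = 0"
          using reduce[OF B Kp hyp] True by blast
        define f' where "f' = Poly_Mapping.single 0 c * f - Poly_Mapping.single 0 e * h"
        have f'I: "f' \<in> I" unfolding f'_def using fI ceh(1) I by (simp add: ideal_mult ideal_diff)
        have Pf': "Poly_Mapping.map \<phi> f' = Poly_Mapping.single 0 (\<phi> c) * Poly_Mapping.map \<phi> f"
        proof -
          have "Poly_Mapping.single 0 (\<phi> e) * Poly_Mapping.map \<phi> h = 0" using ceh(5) by (simp add: Phi_single_mult)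
          then show ?thesis unfolding f'_def by (simp add: Phi_diff Phi_single_mult)
        qed
        have phic: "\<phi> c \<noteq> 0" using ceh(3) phi_zero_iff by blast
        have kk: "Poly_Mapping.keys (Poly_Mapping.map \<phi> f') = Poly_Mapping.keys (Poly_Mapping.map \<phi> f)"
          unfolding Pf' by (rule keys_smult_field[OF phic])
        have Pf'0: "Poly_Mapping.map \<phi> f' \<noteq> 0" using kk Pf0 by (metis keys_eq_empty)
        then have f'0: "f' \<noteq> 0" by auto
        have Pf'E: "lead_exp ord (Poly_Mapping.map \<phi> f') = E" using lead_exp_keys_eq[OF kk] PfE by simp
        have keys': "ord G F" if G: "G \<in> Poly_Mapping.keys f'" for G
        proof -
          have lk: "Poly_Mapping.lookup f' G = c * Poly_Mapping.lookup f G - e * Poly_Mapping.lookup h G"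
            unfolding f'_def by (simp add: lookup_minus lookup_smult)
          have nz: "Poly_Mapping.lookup f' G \<noteq> 0" using G by (simp add: in_keys_iff)
          show ?thesis
          proof (cases "G = F")
            case True
            then have "Poly_Mapping.lookup f' G = 0" using lk ceh(4) by simp
            then show ?thesis using nz by blast
          next
            case False
            have "Poly_Mapping.lookup f G \<noteq> 0 \<or> Poly_Mapping.lookup h G \<noteq> 0"
              using nz lk by auto
            then have "G \<in> Poly_Mapping.keys f \<or> G \<in> Poly_Mapping.keys h" by (simp add: in_keys_iff)
            then show ?thesis using False lf(2) ceh(2) by blast
          qed
        qed
        have "ord (lead_exp ord f') F" using keys' lead_exp_prop[OF f'0] by blast
        then have "\<forall>f. f \<in> I \<longrightarrow> f \<noteq> 0 \<longrightarrow> lead_exp ord f = lead_exp ord f' \<longrightarrow> Poly_Mapping.map \<phi> f \<noteq> 0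
           \<longrightarrow> lead_exp ord (Poly_Mapping.map \<phi> f) = E \<longrightarrow> (\<exists>c\<in>Lc E. c \<notin> p)"
          using less[of "lead_exp ord f'"] by simp
        then show ?thesis using f'I f'0 Pf'0 Pf'E by blast
      qed
    qed
  qed
  have "f \<noteq> 0" using f(2) by auto
  then show ?thesis using main[of "lead_exp ord f"] f unfolding E_def by blast
qed

end


theorem proposition3p13:
  fixes ord :: "('v::finite \<Rightarrow>\<^sub>0 nat) \<Rightarrow> ('v \<Rightarrow>\<^sub>0 nat) \<Rightarrow> bool"
    and I :: "('v, 'a::comm_ring_1) mpoly set"
    and p :: "'a set"
    and \<psi> :: "'a \<Rightarrow> 'b::comm_ring"
    and \<phi> :: "'a \<Rightarrow> 'k::field"
  assumes "noetherian_ring TYPE('a)"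
    and "monomial_order ord"
    and "is_ideal I"
    and "prime_ideal p"
    and B: "is_loc_quot p (contract I) \<psi>"
    and kp: "is_loc_quot p p \<phi>"
    and "\<forall>E. ideal_gen (\<psi> ` coeff_ideal (init_ideal ord I) E) = {0}
            \<or> ideal_gen (\<psi> ` coeff_ideal (init_ideal ord I) E) = UNIV"
  shows "ideal_gen (Poly_Mapping.map \<phi> ` init_ideal ord I)
         = init_ideal ord (ideal_gen (Poly_Mapping.map \<phi> ` I))"
proof -
  interpret setting ord I p \<phi>
    using assms(2,3,4) kp by unfold_locales
  let ?J = "ideal_gen (Poly_Mapping.map \<phi> ` I)"
  let ?L = "ideal_gen (Poly_Mapping.map \<phi> ` init_ideal ord I)"
  let ?R = "init_ideal ord ?J"
  have R_ideal: "is_ideal ?R" unfolding init_ideal_def by (rule ideal_gen_is_ideal)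
  have L_ideal: "is_ideal ?L" by (rule ideal_gen_is_ideal)
  show ?thesis
  proof
    let ?pre = "{q. Poly_Mapping.map \<phi> q \<in> ?R}"
    have pre_ideal: "is_ideal ?pre"
      unfolding is_ideal_def
    proof (intro conjI ballI allI)
      show "0 \<in> ?pre" using ideal_0[OF R_ideal] by simp
    next
      fix x y assume "x \<in> ?pre" "y \<in> ?pre"
      then show "x + y \<in> ?pre" using ideal_add[OF R_ideal] by (simp add: Phi_add)
    next
      fix r x assume "x \<in> ?pre"
      then show "r * x \<in> ?pre" using ideal_mult[OF R_ideal] by (simp add: Phi_mult)
    qed
    have "{init_term ord f | f. f \<in> I \<and> f \<noteq> 0} \<subseteq> ?pre"
    proof
      fix q assume "q \<in> {init_term ord f | f. f \<in> I \<and> f \<noteq> 0}"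
      then obtain f where f: "f \<in> I" "f \<noteq> 0" "q = init_term ord f" by blast
      let ?E = "lead_exp ord f"
      let ?d = "Poly_Mapping.lookup f ?E"
      have Pq: "Poly_Mapping.map \<phi> q = Poly_Mapping.single ?E (\<phi> ?d)"
        unfolding f(3) init_term_def by (simp add: Phi_single)
      show "q \<in> ?pre"
      proof (cases "\<phi> ?d = 0")
        case True
        then show ?thesis using Pq ideal_0[OF R_ideal] by simp
      next
        case False
        then have EP: "?E \<in> Poly_Mapping.keys (Poly_Mapping.map \<phi> f)" by (simp add: in_keys_iff Phi_lookup)
        then have Pf0: "Poly_Mapping.map \<phi> f \<noteq> 0" by (metis keys_zero empty_iff)
        have "\<forall>G\<in>Poly_Mapping.keys f. G \<noteq> ?E \<longrightarrow> ord G ?E" using lead_exp_prop[OF f(2)] by blast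
        then have "\<forall>G\<in>Poly_Mapping.keys (Poly_Mapping.map \<phi> f). G \<noteq> ?E \<longrightarrow> ord G ?E"
          using Phi_keys[of f] by (meson subsetD)
        then have lE: "lead_exp ord (Poly_Mapping.map \<phi> f) = ?E" using lead_exp_eqI[OF EP] by blast
        have "init_term ord (Poly_Mapping.map \<phi> f) = Poly_Mapping.single ?E (\<phi> ?d)"
          unfolding init_term_def lE by (simp add: Phi_lookup)
        moreover have "Poly_Mapping.map \<phi> f \<in> ?J"
          using f(1) ideal_gen_sup by (metis imageI subsetD)
        ultimately have "Poly_Mapping.single ?E (\<phi> ?d) \<in> ?R" using init_in_gen[of _ ?J ord] Pf0 by metis
        then show ?thesis using Pq by simp
      qed
    qed
    then have "init_ideal ord I \<subseteq> ?pre" unfolding init_ideal_def[of ord I] by (rule ideal_gen_least[OF pre_ideal])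
    then have "Poly_Mapping.map \<phi> ` init_ideal ord I \<subseteq> ?R" by blast
    then show "?L \<subseteq> ?R" by (rule ideal_gen_least[OF R_ideal])
  next
    have "{init_term ord g | g. g \<in> ?J \<and> g \<noteq> 0} \<subseteq> ?L"
    proof
      fix q assume "q \<in> {init_term ord g | g. g \<in> ?J \<and> g \<noteq> 0}"
      then obtain g where g: "g \<in> ?J" "g \<noteq> 0" "q = init_term ord g" by blast
      obtain f s where fs: "f \<in> I" "s \<notin> p" "Poly_Mapping.map \<phi> f = Poly_Mapping.single 0 (\<phi> s) * g"
        using D_lemma[OF g(1)] by blast
      have phis: "\<phi> s \<noteq> 0" using fs(2) phi_zero_iff by blast
      have kk: "Poly_Mapping.keys (Poly_Mapping.map \<phi> f) = Poly_Mapping.keys g"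
        unfolding fs(3) by (rule keys_smult_field[OF phis])
      have Pf0: "Poly_Mapping.map \<phi> f \<noteq> 0" using kk g(2) by (metis keys_eq_empty)
      define E where "E = lead_exp ord g"
      have lE: "lead_exp ord (Poly_Mapping.map \<phi> f) = E" unfolding E_def by (rule lead_exp_keys_eq[OF kk])
      obtain c where c: "c \<in> Lc E" "c \<notin> p" using key[OF B assms(7) fs(1) Pf0] lE by blast
      obtain h where h: "h \<in> I" "h \<noteq> 0" "lead_exp ord h = E" "Poly_Mapping.lookup h E = c"
        using Lc_init[OF c] by blast
      have "init_term ord h \<in> init_ideal ord I" by (rule init_in[OF h(1) h(2)])
      then have "Poly_Mapping.single E c \<in> init_ideal ord I" unfolding init_term_def h(3) h(4) .
      then have "Poly_Mapping.map \<phi> (Poly_Mapping.single E c) \<in> Poly_Mapping.map \<phi> ` init_ideal ord I" by (rule imageI)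
      then have "Poly_Mapping.single E (\<phi> c) \<in> ?L" using ideal_gen_sup Phi_single by (metis subsetD)
      then have "Poly_Mapping.single 0 (Poly_Mapping.lookup g E / \<phi> c) * Poly_Mapping.single E (\<phi> c) \<in> ?L"
        by (rule ideal_mult[OF L_ideal])
      moreover have phic: "\<phi> c \<noteq> 0" using c(2) phi_zero_iff by blast
      moreover have "q = Poly_Mapping.single 0 (Poly_Mapping.lookup g E / \<phi> c) * Poly_Mapping.single E (\<phi> c)"
        unfolding g(3) init_term_def E_def[symmetric] using phic by (simp add: mult_single)
      ultimately show "q \<in> ?L" by simp
    qed
    then show "?R \<subseteq> ?L" unfolding init_ideal_def[of ord ?J] by (rule ideal_gen_least[OF L_ideal])
  qed
qed


end
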